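(* Let $k\ge1$, $A,B,C_1,\dots,C_k\in\mathbb{C}^{r\times r}$ with $C_j+mI$ invertible for all $m\ge0$ and all $j$, $AB=BA$, $C_jC_l=C_lC_j$ for all $j,l$. Fix $i$ and $n\ge1$ and suppose $C_i-mI$ is invertible for $0\le m\le n$. Then $$F_{\mathcal C}[C_i-nI]=F_{\mathcal C}+x_iAB\Big[\sum_{n_1=1}^nF_{\mathcal C}[A+I,\,B+I,\,C_i+(2-n_1)I]\,(C_i-n_1I)^{-1}(C_i-(n_1-1)I)^{-1}\Big].$$
   Context: For $M\in\mathbb{C}^{r\times r}$: $(M)_0=I$, $(M)_m=M(M+I)\cdots(M+(m-1)I)$, $(M)^{-1}_m=((M)_m)^{-1}$. $$F_{\mathcal C}=F_{\mathcal C}[A,B;C_1,\dots,C_k;x_1,\dots,x_k]=\sum_{m_1,\dots,m_k\ge0}(A)_{m_1+\cdots+m_k}(B)_{m_1+\cdots+m_k}\prod_{j=1}^k(C_j)^{-1}_{m_j}\prod_{j=1}^k\frac{x_j^{m_j}}{m_j!},$$ $x_j$ scalar variables, matrix products in order of increasing index; identities are of formal power series in the $x_j$. $F_{\mathcal C}[\dots]$ lists only the shifted parameters, all others unchanged. *)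

theory Defs
  imports "HOL-Analysis.Analysis"
begin

fun mpoch :: "complex^'n^'n \<Rightarrow> nat \<Rightarrow> complex^'n^'n" where
  "mpoch M 0 = mat 1"
| "mpoch M (Suc m) = mpoch M m ** (M + mat (of_nat m))"

definition mpoch_inv :: "complex^'n^'n \<Rightarrow> nat \<Rightarrow> complex^'n^'n" where
  "mpoch_inv M m = matrix_inv (mpoch M m)"

fun ordprod :: "(nat \<Rightarrow> complex^'n^'n) \<Rightarrow> nat \<Rightarrow> complex^'n^'n" where
  "ordprod f 0 = mat 1"
| "ordprod f (Suc k) = ordprod f k ** f k"

text \<open>Coefficient of x_0^(m 0) ... x_(k-1)^(m (k-1)) in the formal power series
  F_C[A,B;C_0,...,C_(k-1);x_0,...,x_(k-1)] (variables indexed 0..k-1).\<close>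
definition FC_coeff :: "nat \<Rightarrow> complex^'n^'n \<Rightarrow> complex^'n^'n \<Rightarrow> (nat \<Rightarrow> complex^'n^'n)
    \<Rightarrow> (nat \<Rightarrow> nat) \<Rightarrow> complex^'n^'n" where
  "FC_coeff k A B C m =
     (let s = (\<Sum>j<k. m j) in
      (1 / real (\<Prod>j<k. fact (m j))) *\<^sub>R
        (mpoch A s ** mpoch B s ** ordprod (\<lambda>j. mpoch_inv (C j) (m j)) k))"

end

theory Submission
  imports Defs
begin


type_synonym 'n M = "complex^'n^'n"

lemma mm_rdist: "((X::('n::finite) M) + Y) ** Z = X ** Z + Y ** Z"
  by (vector matrix_matrix_mult_def sum.distrib[symmetric] field_simps)
lemma mm_ldist: "(Z::('n::finite) M) ** (X + Y) = Z ** X + Z ** Y"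
  by (rule matrix_add_ldistrib)
lemma mm_rdist_diff: "((X::('n::finite) M) - Y) ** Z = X ** Z - Y ** Z"
  by (vector matrix_matrix_mult_def sum_subtractf[symmetric] field_simps)
lemma mm_ldist_diff: "(Z::('n::finite) M) ** (X - Y) = Z ** X - Z ** Y"
  by (vector matrix_matrix_mult_def sum_subtractf[symmetric] field_simps)
lemma mat_add: "mat a + mat b = (mat (a + b) :: ('n::finite) M)"
  by (vector mat_def)
lemma mat_diff: "mat a - mat b = (mat (a - b) :: ('n::finite) M)"
  by (vector mat_def)
lemma mat_mult_comm: "mat a ** (X::('n::finite) M) = X ** mat a"
  unfolding matrix_matrix_mult_def mat_def
  by (auto simp: vec_eq_iff if_distrib if_distribR sum.delta sum.delta' cong: if_cong)
lemma mat_nat_mult: "mat (of_nat q) ** (X::('n::finite) M) = real q *\<^sub>R X"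
proof -
  have "(real q *\<^sub>R mat 1 :: 'n M) = mat (of_nat q)" by (vector mat_def scaleR_conv_of_real)
  then show ?thesis by (metis scalar_matrix_assoc matrix_mul_lid)
qed

lemma sum_mm_left: "finite S \<Longrightarrow> (X::('n::finite) M) ** sum (f::_\<Rightarrow>'n M) S = (\<Sum>i\<in>S. X ** f i)"
  by (induction S rule: finite_induct) (auto simp: mm_ldist)
lemma sum_mm_right: "finite S \<Longrightarrow> sum (f::_\<Rightarrow>'n M) S ** (X::('n::finite) M) = (\<Sum>i\<in>S. f i ** X)"
  by (induction S rule: finite_induct) (auto simp: mm_rdist)

lemma inv_props: "invertible (X::('n::finite) M) \<Longrightarrow> X ** matrix_inv X = mat 1 \<and> matrix_inv X ** X = mat 1"
  unfolding invertible_def matrix_inv_def by (rule someI_ex)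
lemma inv_r: "invertible (X::('n::finite) M) \<Longrightarrow> X ** matrix_inv X = mat 1" using inv_props by blast
lemma inv_l: "invertible (X::('n::finite) M) \<Longrightarrow> matrix_inv X ** X = mat 1" using inv_props by blast
lemma inv_unique: "(X::('n::finite) M) ** (Y::'n M) = mat 1 \<Longrightarrow> matrix_inv X = Y"
proof -
  assume h: "X ** Y = mat 1"
  hence h2: "Y ** X = mat 1" using matrix_left_right_inverse by blast
  hence iv: "invertible X" using h invertible_def by blast
  have "matrix_inv X = matrix_inv X ** (X ** Y)" by (simp add: h)
  also have "\<dots> = Y" by (simp add: matrix_mul_assoc inv_l[OF iv])
  finally show ?thesis .
qed
lemma inv_mult: "invertible (X::('n::finite) M) \<Longrightarrow> invertible (Y::'n M) \<Longrightarrow> matrix_inv (X ** Y) = matrix_inv Y ** matrix_inv X"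
proof -
  assume a: "invertible X" "invertible Y"
  have "X ** Y ** (matrix_inv Y ** matrix_inv X) = X ** ((Y ** matrix_inv Y) ** matrix_inv X)"
    by (simp add: matrix_mul_assoc)
  also have "\<dots> = mat 1" using a by (simp add: inv_r)
  finally show ?thesis by (rule inv_unique)
qed
lemma comm_inv: "(X::('n::finite) M) ** (Y::'n M) = Y ** X \<Longrightarrow> invertible Y \<Longrightarrow> X ** matrix_inv Y = matrix_inv Y ** X"
proof -
  assume c: "X ** Y = Y ** X" and iv: "invertible Y"
  have "X ** matrix_inv Y = matrix_inv Y ** (Y ** X) ** matrix_inv Y"
    by (simp add: matrix_mul_assoc inv_l[OF iv])
  also have "\<dots> = matrix_inv Y ** (X ** Y) ** matrix_inv Y" by (simp add: c)
  also have "\<dots> = matrix_inv Y ** X" by (metis iv inv_r matrix_mul_assoc matrix_mul_rid)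
  finally show ?thesis .
qed
lemma comm_inv2: "(X::('n::finite) M) ** (Y::'n M) = Y ** X \<Longrightarrow> invertible X \<Longrightarrow> invertible Y \<Longrightarrow>
   matrix_inv X ** matrix_inv Y = matrix_inv Y ** matrix_inv X"
  by (metis comm_inv)

lemma mpoch_comm: "(Y::('n::finite) M) ** (X::'n M) = X ** Y \<Longrightarrow> Y ** mpoch X t = mpoch X t ** Y"
proof (induction t)
  case 0 then show ?case by simp
next
  case (Suc t)
  have "Y ** (X + mat (of_nat t)) = (X + mat (of_nat t)) ** Y"
    using Suc.prems by (simp add: mm_ldist mm_rdist mat_mult_comm)
  then show ?case using Suc by (simp add: matrix_mul_assoc) (metis matrix_mul_assoc)
qed

lemma mpoch_shift: "mpoch (X::('n::finite) M) (Suc t) = X ** mpoch (X + mat 1) t"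
proof (induction t)
  case 0 then show ?case by simp
next
  case (Suc t)
  have "mpoch X (Suc (Suc t)) = X ** mpoch (X + mat 1) t ** (X + mat (of_nat (Suc t)))"
    using Suc by simp
  also have "X + mat (of_nat (Suc t)) = X + mat 1 + mat (of_nat t)"
    by (simp add: mat_add add.assoc)
  finally show ?case by (simp add: matrix_mul_assoc)
qed

lemma mpoch_invertible: "(\<And>j. j < t \<Longrightarrow> invertible ((X::('n::finite) M) + mat (of_nat j))) \<Longrightarrow> invertible (mpoch X t)"
proof (induction t)
  case 0 then show ?case by (auto simp: invertible_def)
next
  case (Suc t) then show ?case by (auto intro!: invertible_mult)
qed



lemma mat_int_eq: "(d::('n::finite) M) - mat 1 = d + mat (of_int (-1))"
  by (vector mat_def)

lemma KL:
  fixes d :: "('n::finite) M"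
  assumes inv: "\<And>j::int. j \<ge> -1 \<Longrightarrow> invertible (d + mat (of_int j))"
  shows "matrix_inv (mpoch (d - mat 1) (Suc t)) - matrix_inv (mpoch d (Suc t)) =
    real (Suc t) *\<^sub>R (matrix_inv (mpoch (d + mat 1) t) ** matrix_inv (d - mat 1) ** matrix_inv d)"
proof -
  define P where "P = mpoch d t"
  define Q where "Q = mpoch (d + mat 1) t"
  define a where "a = matrix_inv (d - mat 1)"
  define b where "b = matrix_inv (d + mat (of_nat t))"
  define p where "p = matrix_inv P"
  define q where "q = matrix_inv Q"
  define e where "e = matrix_inv d"
  have ivn: "invertible (d + mat (of_nat j))" for j
    using inv[of "int j"] by simp
  have ivm: "invertible (d - mat 1)" using inv[of "-1"] by (simp add: mat_int_eq)
  have ivd: "invertible d" using ivn[of 0] by simp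
  have ivb: "invertible (d + mat (of_nat t))" by (rule ivn)
  have ivP: "invertible P" unfolding P_def by (rule mpoch_invertible, rule ivn)
  have d1j: "d + mat 1 + mat (of_nat j) = d + mat (of_nat (Suc j))" for j
    by (simp add: mat_add add.assoc add.commute)
  have ivQ: "invertible Q" unfolding Q_def by (rule mpoch_invertible) (metis d1j ivn)
  have cdm: "(d - mat 1) ** d = d ** (d - mat 1)"
    by (simp add: mm_rdist_diff mm_ldist_diff mat_mult_comm)
  have cdb: "(d + mat (of_nat t)) ** d = d ** (d + mat (of_nat t))"
    by (simp add: mm_rdist mm_ldist mat_mult_comm)
  have cQm: "(d - mat 1) ** (d + mat 1) = (d + mat 1) ** (d - mat 1)"
    by (simp add: mm_rdist_diff mm_ldist_diff mm_rdist mm_ldist mat_mult_comm)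
  have E1: "mpoch (d - mat 1) (Suc t) = (d - mat 1) ** P"
    unfolding P_def by (simp only: mpoch_shift) simp
  have E2: "mpoch d (Suc t) = P ** (d + mat (of_nat t))" unfolding P_def by simp
  have E3: "mpoch d (Suc t) = d ** Q" unfolding Q_def by (rule mpoch_shift)
  have L1: "matrix_inv (mpoch (d - mat 1) (Suc t)) = p ** a"
    unfolding E1 p_def a_def by (rule inv_mult[OF ivm ivP])
  have L2: "matrix_inv (mpoch d (Suc t)) = b ** p"
    unfolding E2 p_def b_def by (rule inv_mult[OF ivP ivb])
  have L3: "matrix_inv (mpoch d (Suc t)) = q ** e"
    unfolding E3 q_def e_def by (rule inv_mult[OF ivd ivQ])
  have pa: "p ** a = a ** p" unfolding p_def a_def P_def
    by (rule comm_inv2[OF mpoch_comm[OF cdm, symmetric] _ ivm]) (simp add: ivP[unfolded P_def])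
  have pb: "p ** b = b ** p" unfolding p_def b_def P_def
    by (rule comm_inv2[OF mpoch_comm[OF cdb, symmetric] _ ivb]) (simp add: ivP[unfolded P_def])
  have qa: "q ** a = a ** q" unfolding q_def a_def Q_def
    by (rule comm_inv2[OF mpoch_comm[OF cQm, symmetric] _ ivm]) (simp add: ivQ[unfolded Q_def])
  have ab: "a - b = real (Suc t) *\<^sub>R (a ** b)"
  proof -
    have s: "(d + mat (of_nat t)) - (d - mat 1) = (mat (of_nat (Suc t)) :: 'n M)"
      by (vector mat_def)
    have "a - b = a ** ((d + mat (of_nat t)) ** b) - (a ** (d - mat 1)) ** b"
      unfolding a_def b_def by (simp add: inv_r inv_l ivm ivb)
    also have "\<dots> = a ** ((d + mat (of_nat t)) - (d - mat 1)) ** b"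
      by (simp only: mm_rdist_diff mm_ldist_diff matrix_mul_assoc)
    also have "\<dots> = real (Suc t) *\<^sub>R (a ** b)"
    proof -
      have "a ** mat (of_nat (Suc t)) = real (Suc t) *\<^sub>R a" by (metis mat_mult_comm mat_nat_mult)
      then show ?thesis unfolding s by (metis scalar_matrix_assoc)
    qed
    finally show ?thesis .
  qed
  have "p ** a - b ** p = p ** (a - b)" by (simp add: mm_ldist_diff pb)
  also have "\<dots> = real (Suc t) *\<^sub>R (p ** (a ** b))" by (simp only: ab matrix_scalar_ac scalar_matrix_assoc[symmetric])
  also have "p ** (a ** b) = a ** (b ** p)"
    by (metis matrix_mul_assoc pa pb)
  also have "b ** p = q ** e" using L2 L3 by simp
  also have "a ** (q ** e) = q ** a ** e" by (simp add: matrix_mul_assoc qa)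
  finally have F: "p ** a - q ** e = real (Suc t) *\<^sub>R (q ** a ** e)" .
  show ?thesis using F by (simp only: L1 L3 a_def[symmetric] e_def[symmetric] Q_def[symmetric] q_def[symmetric])
qed



lemma ordprod_factor:
  fixes f :: "nat \<Rightarrow> ('n::finite) M"
  assumes "\<forall>j<k. j \<noteq> i \<longrightarrow> f j ** X = X ** f j"
  shows "ordprod (f(i:=X)) k = ordprod (f(i:=mat 1)) k ** (if i<k then X else mat 1)"
  using assms
proof (induction k)
  case 0 then show ?case by simp
next
  case (Suc k)
  have "\<forall>j<k. j \<noteq> i \<longrightarrow> f j ** X = X ** f j" using Suc.prems by auto
  note IH = Suc.IH[OF this]
  show ?case
  proof (cases "i < k")
    case True
    then have "f k ** X = X ** f k" using Suc.prems by auto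
    then show ?thesis using True IH by (simp add: matrix_mul_assoc[symmetric])
  next
    case False
    then show ?thesis using IH by (cases "i = k") auto
  qed
qed

lemma telescope:
  fixes g :: "nat \<Rightarrow> 'a::ab_group_add"
  shows "(\<Sum>n1\<in>{1..n}. g n1 - g (n1 - 1)) = g n - g 0"
  by (induction n) (auto simp: atLeastAtMostSuc_conv)

lemma comm_mpinv:
  fixes X c :: "('n::finite) M"
  assumes "X ** c = c ** X" "invertible (mpoch X p)" "invertible (mpoch (c + mat z) q)"
  shows "mpoch_inv X p ** mpoch_inv (c + mat z) q = mpoch_inv (c + mat z) q ** mpoch_inv X p"
proof -
  have "X ** (c + mat z) = (c + mat z) ** X" using assms(1) by (simp add: mm_ldist mm_rdist mat_mult_comm)
  then have "X ** mpoch (c + mat z) q = mpoch (c + mat z) q ** X" by (rule mpoch_comm)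
  then have "mpoch (c + mat z) q ** mpoch X p = mpoch X p ** mpoch (c + mat z) q"
    by (rule mpoch_comm[OF sym])
  then show ?thesis unfolding mpoch_inv_def by (rule comm_inv2[OF sym assms(2,3)])
qed

theorem mainTheorem10:
  fixes k :: nat and A B :: "complex^'n^'n" and C :: "nat \<Rightarrow> complex^'n^'n"
    and i n :: nat
  assumes "k \<ge> 1"
    and "\<And>j m. j < k \<Longrightarrow> invertible (C j + mat (of_nat m))"
    and "A ** B = B ** A"
    and "\<And>j l. j < k \<Longrightarrow> l < k \<Longrightarrow> C j ** C l = C l ** C j"
    and "i < k" and "n \<ge> 1"
    and "\<And>m. m \<le> n \<Longrightarrow> invertible (C i - mat (of_nat m))"
  shows "\<forall>m. (\<forall>j\<ge>k. m j = 0) \<longrightarrow>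
    FC_coeff k A B (C(i := C i - mat (of_nat n))) m =
      FC_coeff k A B C m +
      (if 1 \<le> m i then
         A ** B **
         (\<Sum>n1\<in>{1..n}.
            FC_coeff k (A + mat 1) (B + mat 1) (C(i := C i + mat (of_int (2 - int n1))))
              (m(i := m i - 1))
            ** matrix_inv (C i - mat (of_nat n1))
            ** matrix_inv (C i - mat (of_nat (n1 - 1))))
       else 0)"
proof (intro allI impI)
  fix m :: "nat \<Rightarrow> nat" assume mz: "\<forall>j\<ge>k. m j = 0"
  define c where "c = C i"
  have H: "invertible (c + mat (of_int z))" if z: "z \<ge> - int n" for z :: int
  proof (cases "z \<ge> 0")
    case True
    then have "c + mat (of_int z) = C i + mat (of_nat (nat z))" unfolding c_def by simp
    then show ?thesis using assms(2)[OF assms(5)] by simp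
  next
    case False
    have "c + mat (of_int z) = C i - mat (of_nat (nat (-z)))" unfolding c_def using False
      by (vector mat_def of_nat_nat)
    moreover have "nat (-z) \<le> n" using z by simp
    ultimately show ?thesis using assms(7) by simp
  qed
  have cm_add: "X + mat (of_int z) + mat (of_nat j) = X + mat (of_int (z + int j))" for X :: "'n M" and z j
    by (vector mat_def)
  have Hm: "invertible (mpoch (c + mat (of_int z)) q)" if z: "z \<ge> - int n" for z q
    by (rule mpoch_invertible) (metis cm_add H z le_add_same_cancel1 add_increasing2 of_nat_0_le_iff order_trans)
  have Cj: "invertible (mpoch (C j) q)" if "j < k" for j q
    by (rule mpoch_invertible) (rule assms(2)[OF that])
  have comm: "mpoch_inv (C j) p ** mpoch_inv (c + mat (of_int z)) q = mpoch_inv (c + mat (of_int z)) q ** mpoch_inv (C j) p"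
    if "j < k" "z \<ge> - int n" for j p q z
  proof (rule comm_mpinv)
    show "C j ** c = c ** C j" unfolding c_def by (rule assms(4)[OF that(1) assms(5)])
  qed (auto simp: Cj[OF that(1)] Hm[OF that(2)])
  show "FC_coeff k A B (C(i := C i - mat (of_nat n))) m =
      FC_coeff k A B C m +
      (if 1 \<le> m i then
         A ** B **
         (\<Sum>n1\<in>{1..n}.
            FC_coeff k (A + mat 1) (B + mat 1) (C(i := C i + mat (of_int (2 - int n1))))
              (m(i := m i - 1))
            ** matrix_inv (C i - mat (of_nat n1))
            ** matrix_inv (C i - mat (of_nat (n1 - 1))))
       else 0)"
  proof (cases "1 \<le> m i")
    case False
    then have mi: "m i = 0" by simp
    have eq: "(\<lambda>j. mpoch_inv ((C(i := X)) j) (m j)) = (\<lambda>j. mpoch_inv (C j) (m j))" for X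
      by (rule ext) (simp add: mi mpoch_inv_def)
    have "FC_coeff k A B (C(i := X)) m = FC_coeff k A B C m" for X
      unfolding FC_coeff_def eq ..
    then show ?thesis using False by simp
  next
    case True
    obtain t where mi: "m i = Suc t" using True by (cases "m i") auto
    define f where "f j = mpoch_inv (C j) (m j)" for j
    define Q where "Q = ordprod (f(i := mat 1)) k"
    define m' where "m' = m(i := m i - 1)"
    define T where "T j = mpoch_inv (c - mat (of_nat j)) (Suc t)" for j
    define Y where "Y n1 = mpoch_inv (C i + mat (of_int (2 - int n1))) t" for n1
    define i1 where "i1 n1 = matrix_inv (C i - mat (of_nat n1))" for n1
    define i2 where "i2 n1 = matrix_inv (C i - mat (of_nat (n1 - 1)))" for n1
    define W where "W = (\<Sum>n1\<in>{1..n}. Y n1 ** i1 n1 ** i2 n1)"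
    have cnat: "c - mat (of_nat j) = c + mat (of_int (- int j))" for j by (vector mat_def)
    have K: "T n1 - T (n1 - 1) = real (Suc t) *\<^sub>R (Y n1 ** i1 n1 ** i2 n1)" if n1: "n1 \<in> {1..n}" for n1
    proof -
      define d where "d = c + mat (of_int (1 - int n1))"
      have ivd: "invertible (d + mat (of_int j))" if "j \<ge> -1" for j :: int
      proof -
        have "d + mat (of_int j) = c + mat (of_int (1 - int n1 + j))" unfolding d_def by (vector mat_def)
        then show ?thesis using H[of "1 - int n1 + j"] that n1 by auto
      qed
      have e1: "d - mat 1 = c - mat (of_nat n1)" unfolding d_def by (vector mat_def)
      have e2: "d = c - mat (of_nat (n1 - 1))" unfolding d_def using n1 by (vector mat_def of_nat_diff)
      have e3: "d + mat 1 = C i + mat (of_int (2 - int n1))" unfolding d_def c_def by (vector mat_def)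
      show ?thesis using KL[OF ivd, of t] unfolding T_def Y_def i1_def i2_def mpoch_inv_def e1 e3
        by (simp only: e2 c_def)
    qed
    have TW: "T n - T 0 = real (Suc t) *\<^sub>R W"
    proof -
      have "T n - T 0 = (\<Sum>n1\<in>{1..n}. T n1 - T (n1 - 1))" by (rule telescope[symmetric])
      also have "\<dots> = (\<Sum>n1\<in>{1..n}. real (Suc t) *\<^sub>R (Y n1 ** i1 n1 ** i2 n1))"
        by (rule sum.cong[OF refl K])
      finally show ?thesis unfolding W_def by (simp add: scaleR_sum_right)
    qed
    have commX: "\<forall>j<k. j \<noteq> i \<longrightarrow> f j ** mpoch_inv (c + mat (of_int z)) q = mpoch_inv (c + mat (of_int z)) q ** f j"
      if "z \<ge> - int n" for z q unfolding f_def using comm that by blast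
    have OP: "ordprod (f(i := mpoch_inv (c + mat (of_int z)) q)) k = Q ** mpoch_inv (c + mat (of_int z)) q"
      if "z \<ge> - int n" for z q
      using ordprod_factor[OF commX[OF that]] assms(5) unfolding Q_def by simp
    have OL: "ordprod (\<lambda>j. mpoch_inv ((C(i := C i - mat (of_nat n))) j) (m j)) k = Q ** T n"
    proof -
      have "(\<lambda>j. mpoch_inv ((C(i := C i - mat (of_nat n))) j) (m j)) = f(i := mpoch_inv (c + mat (of_int (- int n))) (Suc t))"
      proof (rule ext)
        fix j
        have "mat (- of_nat n) = - (mat (of_nat n) :: 'n M)" by (vector mat_def)
        then show "mpoch_inv ((C(i := C i - mat (of_nat n))) j) (m j) = (f(i := mpoch_inv (c + mat (of_int (- int n))) (Suc t))) j"
          by (simp add: f_def mi c_def)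
      qed
      then show ?thesis using OP[of "- int n" "Suc t"] by (simp add: T_def cnat)
    qed
    have O1: "ordprod (\<lambda>j. mpoch_inv (C j) (m j)) k = Q ** T 0"
    proof -
      have "(\<lambda>j. mpoch_inv (C j) (m j)) = f(i := mpoch_inv (c + mat (of_int 0)) (Suc t))"
        by (rule ext) (simp add: f_def mi c_def)
      then show ?thesis using OP[of 0 "Suc t"] by (simp add: T_def)
    qed
    have O2: "ordprod (\<lambda>j. mpoch_inv ((C(i := C i + mat (of_int (2 - int n1)))) j) (m' j)) k = Q ** Y n1"
      if n1: "n1 \<in> {1..n}" for n1
    proof -
      have "(\<lambda>j. mpoch_inv ((C(i := C i + mat (of_int (2 - int n1)))) j) (m' j)) = f(i := mpoch_inv (c + mat (of_int (2 - int n1))) t)"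
        by (rule ext) (simp add: f_def mi c_def m'_def)
      then show ?thesis using OP[of "2 - int n1" t] n1 by (simp add: Y_def c_def)
    qed
    define s' where "s' = (\<Sum>j<k. m' j)"
    define R where "R = (\<Prod>j\<in>{..<k}-{i}. fact (m j) :: nat)"
    have ik: "i \<in> {..<k}" using assms(5) by simp
    have mm': "j \<in> {..<k}-{i} \<Longrightarrow> m' j = m j" for j by (simp add: m'_def)
    have sk: "(\<Sum>j<k. m j) = Suc s'"
    proof -
      have "(\<Sum>j<k. m j) = m i + (\<Sum>j\<in>{..<k}-{i}. m j)" by (rule sum.remove[OF _ ik]) simp
      moreover have "s' = m' i + (\<Sum>j\<in>{..<k}-{i}. m' j)" unfolding s'_def by (rule sum.remove[OF _ ik]) simp
      moreover have "(\<Sum>j\<in>{..<k}-{i}. m' j) = (\<Sum>j\<in>{..<k}-{i}. m j)" by (rule sum.cong[OF refl mm'])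
      ultimately show ?thesis by (simp add: mi m'_def)
    qed
    have pk1: "(\<Prod>j<k. fact (m j)) = fact (Suc t) * R"
      unfolding R_def mi[symmetric] by (rule prod.remove[OF _ ik]) simp
    have pk2: "(\<Prod>j<k. fact (m' j)) = fact t * R"
    proof -
      have "(\<Prod>j<k. fact (m' j)) = fact (m' i) * (\<Prod>j\<in>{..<k}-{i}. fact (m' j) :: nat)" by (rule prod.remove[OF _ ik]) simp
      moreover have "(\<Prod>j\<in>{..<k}-{i}. fact (m' j)) = R" unfolding R_def by (rule prod.cong[OF refl]) (simp add: mm')
      ultimately show ?thesis by (simp add: mi m'_def)
    qed
    define G where "G = mpoch A (Suc s') ** mpoch B (Suc s')"
    define G' where "G' = mpoch (A + mat 1) s' ** mpoch (B + mat 1) s'"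
    define \<kappa> where "\<kappa> = 1 / real (fact t * R)"
    define \<kappa>0 where "\<kappa>0 = 1 / real (fact (Suc t) * R)"
    have L: "FC_coeff k A B (C(i := C i - mat (of_nat n))) m = \<kappa>0 *\<^sub>R (G ** (Q ** T n))"
      unfolding FC_coeff_def Let_def OL sk pk1 G_def \<kappa>0_def ..
    have R1: "FC_coeff k A B C m = \<kappa>0 *\<^sub>R (G ** (Q ** T 0))"
      unfolding FC_coeff_def Let_def O1 sk pk1 G_def \<kappa>0_def ..
    have R2: "FC_coeff k (A + mat 1) (B + mat 1) (C(i := C i + mat (of_int (2 - int n1)))) m' = \<kappa> *\<^sub>R (G' ** (Q ** Y n1))"
      if n1: "n1 \<in> {1..n}" for n1
      unfolding FC_coeff_def Let_def O2[OF n1] s'_def[symmetric] pk2 G'_def \<kappa>_def ..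
    have GG: "G = A ** B ** G'"
    proof -
      have c1: "B ** (A + mat 1) = (A + mat 1) ** B" using assms(3)
        by (simp add: mm_ldist mm_rdist mat_mult_comm)
      have c2: "B ** mpoch (A + mat 1) s' = mpoch (A + mat 1) s' ** B" by (rule mpoch_comm[OF c1])
      have "G = A ** mpoch (A + mat 1) s' ** (B ** mpoch (B + mat 1) s')"
        unfolding G_def by (simp only: mpoch_shift)
      also have "\<dots> = A ** (B ** mpoch (A + mat 1) s') ** mpoch (B + mat 1) s'"
        by (simp only: matrix_mul_assoc c2)
      also have "\<dots> = A ** B ** G'" unfolding G'_def by (simp only: matrix_mul_assoc)
      finally show ?thesis .
    qed
    have kk: "\<kappa>0 * real (Suc t) = \<kappa>"
    proof -
      have "R \<noteq> 0" unfolding R_def by simp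
      then have nz: "real (fact t * R) \<noteq> 0" by simp
      have X: "real (fact (Suc t) * R) = real (Suc t) * real (fact t * R)"
        by (simp only: fact_Suc of_nat_id of_nat_mult mult.assoc)
      show ?thesis unfolding \<kappa>0_def \<kappa>_def X using nz by (simp del: of_nat_Suc)
    qed
    have SS: "(\<Sum>n1\<in>{1..n}. FC_coeff k (A + mat 1) (B + mat 1) (C(i := C i + mat (of_int (2 - int n1)))) m'
            ** matrix_inv (C i - mat (of_nat n1)) ** matrix_inv (C i - mat (of_nat (n1 - 1))))
          = \<kappa> *\<^sub>R (G' ** Q ** W)"
    proof -
      have "(\<Sum>n1\<in>{1..n}. FC_coeff k (A + mat 1) (B + mat 1) (C(i := C i + mat (of_int (2 - int n1)))) m'
            ** matrix_inv (C i - mat (of_nat n1)) ** matrix_inv (C i - mat (of_nat (n1 - 1))))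
          = (\<Sum>n1\<in>{1..n}. \<kappa> *\<^sub>R (G' ** Q ** (Y n1 ** i1 n1 ** i2 n1)))"
      proof (rule sum.cong[OF refl])
        fix n1 assume n1: "n1 \<in> {1..n}"
        show "FC_coeff k (A + mat 1) (B + mat 1) (C(i := C i + mat (of_int (2 - int n1)))) m'
            ** matrix_inv (C i - mat (of_nat n1)) ** matrix_inv (C i - mat (of_nat (n1 - 1)))
          = \<kappa> *\<^sub>R (G' ** Q ** (Y n1 ** i1 n1 ** i2 n1))"
          unfolding R2[OF n1] i1_def i2_def
          by (simp only: scalar_matrix_assoc[symmetric] matrix_scalar_ac matrix_mul_assoc)
      qed
      also have "\<dots> = \<kappa> *\<^sub>R (G' ** Q ** W)"
        unfolding W_def by (simp add: scaleR_sum_right sum_mm_left)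
      finally show ?thesis .
    qed
    have Tn: "T n = T 0 + real (Suc t) *\<^sub>R W" using TW by (simp add: algebra_simps)
    have "FC_coeff k A B (C(i := C i - mat (of_nat n))) m
        = \<kappa>0 *\<^sub>R (G ** (Q ** T 0)) + (\<kappa>0 * real (Suc t)) *\<^sub>R (G ** (Q ** W))"
      unfolding L Tn
      by (simp only: mm_ldist scaleR_add_right matrix_scalar_ac scalar_matrix_assoc[symmetric] scaleR_scaleR mult.commute)
    also have "\<dots> = FC_coeff k A B C m + A ** B ** (\<kappa> *\<^sub>R (G' ** Q ** W))"
      unfolding R1 kk GG
      by (simp only: matrix_scalar_ac scalar_matrix_assoc[symmetric] matrix_mul_assoc)
    finally show ?thesis unfolding SS[unfolded m'_def] using True by simp
  qed
qed


end
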